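(* Let $K$ be a discrete hypergroup, let $\mu$ be the left Haar measure on $K$ given by $\mu(\{x\})=\dfrac{1}{(\delta_x*\delta_{x^-})(\{e\})}$ for $x\in K$, and let $p\geq1$. Then for each $g\in L^p(K,\mu)$, the set $$\big\{f\in L^p(K,\mu):\ |f|\geq|g|\big\}$$ is not $\sigma$-porous in $L^p(K,\mu)$.
   Context: A locally compact hypergroup is a locally compact Hausdorff space $K$ together with a bilinear, positive-continuous map $(\mu,\nu)\mapsto\mu*\nu$ on the space $\mathbb M(K)$ of regular complex Borel measures and an involutive homeomorphism $x\mapsto x^-$ of $K$ such that: (i) $(\mathbb M(K),* )$ is a complex associative algebra; (ii) for $x,y\in K$, $\delta_x*\delta_y$ is a probability measure with compact support ($\delta_x$ = Dirac measure); (iii) $(x,y)\mapsto\operatorname{supp}(\delta_x*\delta_y)$ is continuous into the nonempty compact subsets of $K$ with the Michael topology; (iv) there is $e\in K$ with $\delta_x*\delta_e=\delta_e*\delta_x=\delta_x$ for all $x$; (v) $e\in\operatorname{supp}(\delta_x*\delta_y)$ iff $x=y^-$. $K$ is discrete if its topology is discrete. Porosity: Let $X$ be a metric space and $0<\lambda<1$. A set $E\subseteq X$ is $\lambda$-porous at $x\in E$ if for each $\delta>0$ there is $y\in B(x;\delta)\setminus\{x\}$ with $B(y;\lambda\, d(x,y))\cap E=\varnothing$; $E$ is $\lambda$-porous if it is $\lambda$-porous at each of its points; $E$ is $\sigma$-$\lambda$-porous if it is a countable union of $\lambda$-porous subsets of $X$. A set is called $\sigma$-porous if it is $\sigma$-$\lambda$-porous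 for some $\lambda\in(0,1)$; "not $\sigma$-porous" means not $\sigma$-$\lambda$-porous for any $\lambda\in(0,1)$. *)

theory Defs
  imports "HOL-Analysis.Analysis"
begin

text \<open>Since K is discrete, a regular
complex Borel measure on K is a summable function on K, and the convolution on M(K),
being bilinear and positive-continuous, is determined by the products of Dirac measures.
We record these by structure constants: c x y z = (delta_x * delta_y)({z}).
Compact support in a discrete space means finite support; continuity conditions and
local compactness / Hausdorffness are automatic for the discrete topology.\<close>

definition discrete_hypergroup ::
  "('a \<Rightarrow> 'a \<Rightarrow> 'a \<Rightarrow> real) \<Rightarrow> ('a \<Rightarrow> 'a) \<Rightarrow> 'a \<Rightarrow> bool" where
  "discrete_hypergroup c iv e \<longleftrightarrow>
     (\<forall>x y z. 0 \<le> c x y z) \<and>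
     (\<forall>x y. finite {z. c x y z \<noteq> 0}) \<and>
     (\<forall>x y. (\<Sum>z\<in>{z. c x y z \<noteq> 0}. c x y z) = 1) \<and>
     (\<forall>x y z t. (\<Sum>w\<in>{w. c x y w \<noteq> 0}. c x y w * c w z t)
              = (\<Sum>w\<in>{w. c y z w \<noteq> 0}. c y z w * c x w t)) \<and>
     (\<forall>x. iv (iv x) = x) \<and>
     (\<forall>x z. c x e z = (if z = x then 1 else 0)) \<and>
     (\<forall>x z. c e x z = (if z = x then 1 else 0)) \<and>
     (\<forall>x y. c x y e \<noteq> 0 \<longleftrightarrow> x = iv y)"

definition haar_weight :: "('a \<Rightarrow> 'a \<Rightarrow> 'a \<Rightarrow> real) \<Rightarrow> ('a \<Rightarrow> 'a) \<Rightarrow> 'a \<Rightarrow> 'a \<Rightarrow> real" where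
  "haar_weight c iv e x = 1 / c x (iv x) e"

text \<open>L^p(K, mu) for a purely atomic measure with positive atoms w(x): functions
K \<rightarrow> complex with sum |f x|^p w x finite (a.e.-classes are singletons), with the
metric induced by the L^p norm.\<close>
definition lp_space :: "('a \<Rightarrow> real) \<Rightarrow> real \<Rightarrow> ('a \<Rightarrow> complex) set" where
  "lp_space w p = {f. (\<lambda>x. norm (f x) powr p * w x) summable_on UNIV}"

definition lp_dist :: "('a \<Rightarrow> real) \<Rightarrow> real \<Rightarrow> ('a \<Rightarrow> complex) \<Rightarrow> ('a \<Rightarrow> complex) \<Rightarrow> real" where
  "lp_dist w p f g = (\<Sum>\<^sub>\<infinity>x. norm (f x - g x) powr p * w x) powr (1 / p)"

definition lambda_porous_at ::
  "('b \<Rightarrow> 'b \<Rightarrow> real) \<Rightarrow> 'b set \<Rightarrow> real \<Rightarrow> 'b set \<Rightarrow> 'b \<Rightarrow> bool" where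
  "lambda_porous_at d X lam E x \<longleftrightarrow>
     (\<forall>\<delta>>0. \<exists>y\<in>X. d x y < \<delta> \<and> y \<noteq> x \<and>
        {z\<in>X. d y z < lam * d x y} \<inter> E = {})"

definition lambda_porous :: "('b \<Rightarrow> 'b \<Rightarrow> real) \<Rightarrow> 'b set \<Rightarrow> real \<Rightarrow> 'b set \<Rightarrow> bool" where
  "lambda_porous d X lam E \<longleftrightarrow> (\<forall>x\<in>E. lambda_porous_at d X lam E x)"

definition sigma_lambda_porous :: "('b \<Rightarrow> 'b \<Rightarrow> real) \<Rightarrow> 'b set \<Rightarrow> real \<Rightarrow> 'b set \<Rightarrow> bool" where
  "sigma_lambda_porous d X lam E \<longleftrightarrow>
     (\<exists>A :: nat \<Rightarrow> 'b set. (\<forall>n. A n \<subseteq> X \<and> lambda_porous d X lam (A n)) \<and> E = (\<Union>n. A n))"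

definition sigma_porous :: "('b \<Rightarrow> 'b \<Rightarrow> real) \<Rightarrow> 'b set \<Rightarrow> 'b set \<Rightarrow> bool" where
  "sigma_porous d X E \<longleftrightarrow> (\<exists>lam. 0 < lam \<and> lam < 1 \<and> sigma_lambda_porous d X lam E)"

end

theory Submission
  imports Defs
begin

lemma powr_convex_ineq:
  fixes s t a b p :: real
  assumes "p \<ge> 1" "s \<ge> 0" "t \<ge> 0" "a \<ge> 0" "b \<ge> 0" "a + b = 1"
  shows "(a * s + b * t) powr p \<le> a * s powr p + b * t powr p"
proof (cases "s = 0 \<or> t = 0")
  case True
  have k: "x powr p \<le> x" if "0 \<le> x" "x \<le> 1" for x :: real
  proof (cases "x = 0")
    case False
    then have "x powr p \<le> x powr 1" using that assms(1) by (intro powr_mono') auto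
    then show ?thesis using that by simp
  qed (use assms in simp)
  show ?thesis
  proof (cases "s = 0")
    case True
    have "(b * t) powr p = b powr p * t powr p" using assms by (simp add: powr_mult)
    also have "\<dots> \<le> b * t powr p" using k[of b] assms by (intro mult_right_mono) auto
    finally show ?thesis using True assms by simp
  next
    case False
    with \<open>s = 0 \<or> t = 0\<close> have "t = 0" by simp
    have "(a * s) powr p = a powr p * s powr p" using assms by (simp add: powr_mult)
    also have "\<dots> \<le> a * s powr p" using k[of a] assms by (intro mult_right_mono) auto
    finally show ?thesis using \<open>t = 0\<close> assms by simp
  qed
next
  case False
  then have "s > 0" "t > 0" using assms by auto
  from powr_convex[OF assms(1)] show ?thesis
    unfolding convex_on_def using assms \<open>s>0\<close> \<open>t>0\<close> by auto
qed


lemma single_le_infsum: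
  fixes f :: "'a \<Rightarrow> real"
  assumes "f summable_on UNIV" "\<And>x. f x \<ge> 0"
  shows "f x \<le> infsum f UNIV"
  using finite_sum_le_infsum[OF assms(1), of "{x}"] assms(2) by auto

context
  fixes w :: "'a \<Rightarrow> real" and p :: real
  assumes wpos: "\<And>x. w x > 0" and p1: "1 \<le> p"
begin

lemma zero_infsum_imp_zero:
  assumes "(\<lambda>x. norm (u x) powr p * w x) summable_on UNIV"
    and "(\<Sum>\<^sub>\<infinity>x. norm (u x) powr p * w x) = 0"
  shows "u x = 0"
proof -
  have "norm (u x) powr p * w x \<le> 0"
    using single_le_infsum[OF assms(1)] wpos assms(2) by (metis less_imp_le mult_nonneg_nonneg powr_ge_zero)
  then have "norm (u x) powr p \<le> 0" using wpos[of x] by (simp add: mult_le_0_iff)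
  then show ?thesis using p1 by simp
qed

lemma minkowski:
  assumes su: "(\<lambda>x. norm (u x) powr p * w x) summable_on UNIV"
    and sv: "(\<lambda>x. norm (v x) powr p * w x) summable_on UNIV"
  shows "(\<lambda>x. norm (u x + v x) powr p * w x) summable_on UNIV \<and>
    (\<Sum>\<^sub>\<infinity>x. norm (u x + v x) powr p * w x) powr (1/p) \<le>
      (\<Sum>\<^sub>\<infinity>x. norm (u x) powr p * w x) powr (1/p) + (\<Sum>\<^sub>\<infinity>x. norm (v x) powr p * w x) powr (1/p)"
proof -
  define Su where "Su = (\<Sum>\<^sub>\<infinity>x. norm (u x) powr p * w x)"
  define Sv where "Sv = (\<Sum>\<^sub>\<infinity>x. norm (v x) powr p * w x)"
  have Su0: "Su \<ge> 0" unfolding Su_def by (intro infsum_nonneg) (simp add: less_imp_le wpos)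
  have Sv0: "Sv \<ge> 0" unfolding Sv_def by (intro infsum_nonneg) (simp add: less_imp_le wpos)
  show ?thesis
  proof (cases "Su = 0 \<or> Sv = 0")
    case True
    then show ?thesis
    proof
      assume "Su = 0"
      then have "\<And>x. u x = 0" using zero_infsum_imp_zero[OF su] Su_def by simp
      then show ?thesis using sv Su_def \<open>Su = 0\<close> p1 by simp
    next
      assume "Sv = 0"
      then have "\<And>x. v x = 0" using zero_infsum_imp_zero[OF sv] Sv_def by simp
      then show ?thesis using su Sv_def \<open>Sv = 0\<close> p1 by simp
    qed
  next
    case False
    then have Sup: "Su > 0" and Svp: "Sv > 0" using Su0 Sv0 by auto
    define A where "A = Su powr (1/p)"
    define B where "B = Sv powr (1/p)"
    have Ap: "A > 0" and Bp: "B > 0" using Sup Svp by (auto simp: A_def B_def)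
    have ApSu: "A powr p = Su" unfolding A_def using Sup p1 by (simp add: powr_powr)
    have BpSv: "B powr p = Sv" unfolding B_def using Svp p1 by (simp add: powr_powr)
    define a where "a = A / (A + B)"
    define b where "b = B / (A + B)"
    have ABne: "A + B \<noteq> 0" using Ap Bp by simp
    have "a + b = (A + B) / (A + B)" unfolding a_def b_def by (rule add_divide_distrib[symmetric])
    then have ab: "a \<ge> 0" "b \<ge> 0" "a + b = 1" using Ap Bp ABne by (auto simp: a_def b_def)
    define R where "R = (\<lambda>x. (A + B) powr p * (a / Su * (norm (u x) powr p * w x) + b / Sv * (norm (v x) powr p * w x)))"
    have pt: "norm (u x + v x) powr p * w x \<le> R x" for x
    proof -
      have eq: "(A + B) * (a * (norm (u x) / A) + b * (norm (v x) / B)) = norm (u x) + norm (v x)"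
      proof -
        have e1: "a * (norm (u x) / A) = norm (u x) / (A + B)" using Ap by (simp add: a_def)
        have e2: "b * (norm (v x) / B) = norm (v x) / (A + B)" using Bp by (simp add: b_def)
        show ?thesis unfolding e1 e2 add_divide_distrib[symmetric] using ABne by simp
      qed
      have "norm (u x + v x) \<le> (A + B) * (a * (norm (u x) / A) + b * (norm (v x) / B))"
        unfolding eq by (rule norm_triangle_ineq)
      then have "norm (u x + v x) powr p \<le> ((A + B) * (a * (norm (u x) / A) + b * (norm (v x) / B))) powr p"
        using p1 by (intro powr_mono2) auto
      also have "\<dots> = (A + B) powr p * (a * (norm (u x) / A) + b * (norm (v x) / B)) powr p"
        using Ap Bp ab by (simp add: powr_mult)
      also have "\<dots> \<le> (A + B) powr p * (a * (norm (u x) / A) powr p + b * (norm (v x) / B) powr p)"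
        using Ap Bp ab p1 by (intro mult_left_mono powr_convex_ineq) auto
      also have "\<dots> = (A + B) powr p * (a / Su * norm (u x) powr p + b / Sv * norm (v x) powr p)"
        using Ap Bp by (simp add: powr_divide ApSu BpSv)
      finally have "norm (u x + v x) powr p * w x \<le> (A + B) powr p * (a / Su * norm (u x) powr p + b / Sv * norm (v x) powr p) * w x"
        using wpos[of x] by (intro mult_right_mono) auto
      then show ?thesis unfolding R_def by (simp add: algebra_simps)
    qed
    have sR: "R summable_on UNIV" unfolding R_def
      by (intro summable_on_cmult_right summable_on_add su sv)
    have s1: "(\<lambda>x. norm (u x + v x) powr p * w x) summable_on UNIV"
      by (rule summable_on_comparison_test[OF sR pt]) (simp add: less_imp_le wpos)
    have "(\<Sum>\<^sub>\<infinity>x. norm (u x + v x) powr p * w x) \<le> infsum R UNIV"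
      by (intro infsum_mono s1 sR pt)
    also have "infsum R UNIV = (A + B) powr p * (a / Su * Su + b / Sv * Sv)"
    proof -
      have i1: "(\<Sum>\<^sub>\<infinity>x. a / Su * (norm (u x) powr p * w x)) = a / Su * Su"
        unfolding Su_def by (rule infsum_cmult_right) (use su in auto)
      have i2: "(\<Sum>\<^sub>\<infinity>x. b / Sv * (norm (v x) powr p * w x)) = b / Sv * Sv"
        unfolding Sv_def by (rule infsum_cmult_right) (use sv in auto)
      have "infsum R UNIV = (A + B) powr p * (\<Sum>\<^sub>\<infinity>x. a / Su * (norm (u x) powr p * w x) + b / Sv * (norm (v x) powr p * w x))"
        unfolding R_def by (rule infsum_cmult_right) (intro summable_on_add summable_on_cmult_right su sv)
      also have "(\<Sum>\<^sub>\<infinity>x. a / Su * (norm (u x) powr p * w x) + b / Sv * (norm (v x) powr p * w x))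
          = (\<Sum>\<^sub>\<infinity>x. a / Su * (norm (u x) powr p * w x)) + (\<Sum>\<^sub>\<infinity>x. b / Sv * (norm (v x) powr p * w x))"
        by (rule infsum_add) (intro summable_on_cmult_right su sv)+
      finally show ?thesis unfolding i1 i2 .
    qed
    also have "\<dots> = (A + B) powr p" using Sup Svp ab by simp
    finally have "(\<Sum>\<^sub>\<infinity>x. norm (u x + v x) powr p * w x) powr (1/p) \<le> ((A + B) powr p) powr (1/p)"
      using p1 by (intro powr_mono2) (auto intro: infsum_nonneg simp: less_imp_le wpos)
    also have "\<dots> = A + B" using Ap Bp p1 by (simp add: powr_powr)
    finally show ?thesis using s1 A_def B_def Su_def Sv_def by simp
  qed
qed


lemma memX: "f \<in> lp_space w p \<longleftrightarrow> (\<lambda>x. norm (f x) powr p * w x) summable_on UNIV"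
  by (simp add: lp_space_def)

lemma X_add: "f \<in> lp_space w p \<Longrightarrow> g \<in> lp_space w p \<Longrightarrow> (\<lambda>x. f x + g x) \<in> lp_space w p"
  using minkowski[of f g] by (simp add: memX)

lemma X_uminus: "f \<in> lp_space w p \<Longrightarrow> (\<lambda>x. - f x) \<in> lp_space w p"
  by (simp add: memX)

lemma X_diff: "f \<in> lp_space w p \<Longrightarrow> g \<in> lp_space w p \<Longrightarrow> (\<lambda>x. f x - g x) \<in> lp_space w p"
  using X_add[of f "\<lambda>x. - g x"] X_uminus[of g] by simp

lemma d_nonneg: "lp_dist w p f g \<ge> 0"
  by (simp add: lp_dist_def)

lemma d_sym: "lp_dist w p f g = lp_dist w p g f"
  by (simp add: lp_dist_def norm_minus_commute)

lemma d_self: "lp_dist w p f f = 0"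
  by (simp add: lp_dist_def)

lemma d_triangle:
  assumes "f \<in> lp_space w p" "g \<in> lp_space w p" "h \<in> lp_space w p"
  shows "lp_dist w p f h \<le> lp_dist w p f g + lp_dist w p g h"
proof -
  have "(\<lambda>x. f x - g x) \<in> lp_space w p" "(\<lambda>x. g x - h x) \<in> lp_space w p"
    using assms X_diff by auto
  from minkowski[of "\<lambda>x. f x - g x" "\<lambda>x. g x - h x"] this show ?thesis
    by (simp add: memX lp_dist_def)
qed

lemma D_summable: "f \<in> lp_space w p \<Longrightarrow> g \<in> lp_space w p \<Longrightarrow>
   (\<lambda>x. norm (f x - g x) powr p * w x) summable_on UNIV"
  using X_diff[of f g] by (simp add: memX)

lemma pt_bound:
  assumes "f \<in> lp_space w p" "g \<in> lp_space w p"
  shows "norm (f x - g x) * w x powr (1/p) \<le> lp_dist w p f g"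
proof -
  have "norm (f x - g x) powr p * w x \<le> (\<Sum>\<^sub>\<infinity>x. norm (f x - g x) powr p * w x)"
    by (rule single_le_infsum[OF D_summable[OF assms]]) (simp add: less_imp_le wpos)
  then have "(norm (f x - g x) powr p * w x) powr (1/p) \<le> lp_dist w p f g"
    unfolding lp_dist_def using p1 wpos[of x] by (intro powr_mono2) auto
  moreover have "(norm (f x - g x) powr p * w x) powr (1/p) = norm (f x - g x) * w x powr (1/p)"
    using p1 wpos[of x] by (simp add: powr_mult powr_powr)
  ultimately show ?thesis by simp
qed

lemma d_zero:
  assumes "f \<in> lp_space w p" "g \<in> lp_space w p" "lp_dist w p f g = 0"
  shows "f = g"
proof
  fix x
  have "norm (f x - g x) * w x powr (1/p) \<le> 0" using pt_bound[OF assms(1,2), of x] assms(3) by simp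
  moreover have "w x powr (1/p) > 0" using wpos[of x] by simp
  ultimately have "norm (f x - g x) \<le> 0" by (simp add: mult_le_0_iff)
  then show "f x = g x" by simp
qed

lemma d_compare:
  assumes a: "a \<in> lp_space w p" and y: "y \<in> lp_space w p" and K: "K \<ge> 0"
    and le: "\<And>x. norm (z x - y x) \<le> K * norm (a x - y x)"
  shows "z \<in> lp_space w p" "lp_dist w p y z \<le> K * lp_dist w p a y"
proof -
  have pt: "norm (y x - z x) powr p * w x \<le> K powr p * (norm (a x - y x) powr p * w x)" for x
  proof -
    have "norm (y x - z x) powr p \<le> (K * norm (a x - y x)) powr p"
      using le[of x] p1 by (intro powr_mono2) (auto simp: norm_minus_commute)
    also have "\<dots> = K powr p * norm (a x - y x) powr p" using K by (simp add: powr_mult)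
    finally show ?thesis using wpos[of x] by (simp add: mult_right_mono mult.assoc)
  qed
  have sa: "(\<lambda>x. K powr p * (norm (a x - y x) powr p * w x)) summable_on UNIV"
    by (intro summable_on_cmult_right D_summable a y)
  have sz: "(\<lambda>x. norm (y x - z x) powr p * w x) summable_on UNIV"
    by (rule summable_on_comparison_test[OF sa pt]) (simp add: less_imp_le wpos)
  have "(\<lambda>x. y x - z x) \<in> lp_space w p" using sz by (simp add: memX)
  from X_diff[OF y this] show "z \<in> lp_space w p" by simp
  have "(\<Sum>\<^sub>\<infinity>x. norm (y x - z x) powr p * w x) \<le> (\<Sum>\<^sub>\<infinity>x. K powr p * (norm (a x - y x) powr p * w x))"
    by (intro infsum_mono sz sa pt)
  also have "\<dots> = K powr p * (\<Sum>\<^sub>\<infinity>x. norm (a x - y x) powr p * w x)"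
    by (rule infsum_cmult_right) (intro D_summable a y)
  finally have "lp_dist w p y z \<le> (K powr p * (\<Sum>\<^sub>\<infinity>x. norm (a x - y x) powr p * w x)) powr (1/p)"
    unfolding lp_dist_def using p1 by (intro powr_mono2) (auto intro: infsum_nonneg simp: less_imp_le wpos)
  also have "\<dots> = K * lp_dist w p a y"
  proof -
    have "(\<Sum>\<^sub>\<infinity>x. norm (a x - y x) powr p * w x) \<ge> 0"
      by (intro infsum_nonneg) (simp add: less_imp_le wpos)
    then show ?thesis unfolding lp_dist_def using K p1 by (simp add: powr_mult powr_powr)
  qed
  finally show "lp_dist w p y z \<le> K * lp_dist w p a y" .
qed


lemma powr_le_cancel:
  assumes "0 \<le> x" "0 \<le> (y::real)" "x powr p \<le> y powr p" shows "x \<le> y"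
proof (rule ccontr)
  assume "\<not> x \<le> y"
  then have "y powr p < x powr p" using assms p1 by (intro powr_less_mono2) auto
  with assms show False by simp
qed

lemma D_eq: "(\<Sum>\<^sub>\<infinity>x. norm (f x - g x) powr p * w x) = lp_dist w p f g powr p"
proof -
  have "(\<Sum>\<^sub>\<infinity>x. norm (f x - g x) powr p * w x) \<ge> 0"
    by (intro infsum_nonneg) (simp add: less_imp_le wpos)
  then show ?thesis unfolding lp_dist_def using p1 by (simp add: powr_powr)
qed

lemma complete:
  fixes c :: "nat \<Rightarrow> 'a \<Rightarrow> complex"
  assumes cX: "\<And>m. c m \<in> lp_space w p"
    and cauchy: "\<And>e. e > 0 \<Longrightarrow> \<exists>N. \<forall>m\<ge>N. \<forall>n\<ge>N. lp_dist w p (c m) (c n) < e"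
  shows "\<exists>f \<in> lp_space w p. \<forall>e>0. \<exists>N. \<forall>m\<ge>N. lp_dist w p (c m) f \<le> e"
proof -
  have cau: "Cauchy (\<lambda>m. c m x)" for x
  proof (rule metric_CauchyI)
    fix e :: real assume "e > 0"
    have wx: "w x powr (1/p) > 0" using wpos[of x] by simp
    obtain N where N: "\<forall>m\<ge>N. \<forall>n\<ge>N. lp_dist w p (c m) (c n) < e * w x powr (1/p)"
      using cauchy[of "e * w x powr (1/p)"] \<open>e > 0\<close> wx by auto
    show "\<exists>M. \<forall>m\<ge>M. \<forall>n\<ge>M. dist (c m x) (c n x) < e"
    proof (intro exI allI impI)
      fix m n assume "m \<ge> N" "n \<ge> N"
      then have "norm (c m x - c n x) * w x powr (1/p) < e * w x powr (1/p)"
        using pt_bound[OF cX[of m] cX[of n], of x] N by force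
      then show "dist (c m x) (c n x) < e" using wx by (simp add: dist_norm)
    qed
  qed
  define f where "f = (\<lambda>x. lim (\<lambda>m. c m x))"
  have conv: "(\<lambda>m. c m x) \<longlonglongrightarrow> f x" for x
    using cau[of x] unfolding f_def by (simp add: Cauchy_convergent_iff convergent_LIMSEQ_iff)
  have key: "(\<lambda>x. norm (c m x - f x) powr p * w x) summable_on UNIV \<and>
      lp_dist w p (c m) f \<le> e"
    if e: "e > 0" and N: "\<forall>m\<ge>N. \<forall>n\<ge>N. lp_dist w p (c m) (c n) < e" and m: "m \<ge> N" for e N m
  proof -
    have fin: "sum (\<lambda>x. norm (c m x - f x) powr p * w x) F \<le> e powr p" if "finite F" for F
    proof (rule LIMSEQ_le_const2)
      show "(\<lambda>n. sum (\<lambda>x. norm (c m x - c n x) powr p * w x) F) \<longlonglongrightarrow> sum (\<lambda>x. norm (c m x - f x) powr p * w x) F"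
        using p1 by (intro tendsto_sum tendsto_mult_right tendsto_powr2 tendsto_norm tendsto_diff tendsto_const conv) auto
      show "\<exists>N'. \<forall>n\<ge>N'. sum (\<lambda>x. norm (c m x - c n x) powr p * w x) F \<le> e powr p"
      proof (intro exI allI impI)
        fix n assume "n \<ge> N"
        have "sum (\<lambda>x. norm (c m x - c n x) powr p * w x) F \<le> (\<Sum>\<^sub>\<infinity>x. norm (c m x - c n x) powr p * w x)"
          by (rule finite_sum_le_infsum[OF D_summable[OF cX[of m] cX[of n]] that]) (auto simp: less_imp_le wpos)
        also have "\<dots> = lp_dist w p (c m) (c n) powr p" by (rule D_eq)
        also have "\<dots> \<le> e powr p"
          using N m \<open>n \<ge> N\<close> p1 by (intro powr_mono2) (auto simp: d_nonneg less_imp_le)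
        finally show "sum (\<lambda>x. norm (c m x - c n x) powr p * w x) F \<le> e powr p" .
      qed
    qed
    have sm: "(\<lambda>x. norm (c m x - f x) powr p * w x) summable_on UNIV"
      proof (rule nonneg_bdd_above_summable_on)
      show "bdd_above (sum (\<lambda>x. norm (c m x - f x) powr p * w x) ` {F. F \<subseteq> UNIV \<and> finite F})"
        by (rule bdd_aboveI2[where M="e powr p"]) (erule CollectE, rule fin, blast)
    qed (simp add: less_imp_le wpos)
    have "(\<Sum>\<^sub>\<infinity>x. norm (c m x - f x) powr p * w x) \<le> e powr p"
      by (rule infsum_le_finite_sums[OF sm]) (rule fin)
    then have "lp_dist w p (c m) f powr p \<le> e powr p" by (simp add: D_eq)
    note pp = this
    have "lp_dist w p (c m) f \<le> e"
      by (rule powr_le_cancel[OF d_nonneg _ pp]) (use e in simp)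
    with sm show ?thesis by simp
  qed
  obtain N1 where N1: "\<forall>m\<ge>N1. \<forall>n\<ge>N1. lp_dist w p (c m) (c n) < 1" using cauchy[of 1] by auto
  have "(\<lambda>x. c N1 x - f x) \<in> lp_space w p" using key[OF _ N1, of N1] by (simp add: memX)
  from X_diff[OF cX[of N1] this] have fX: "f \<in> lp_space w p" by simp
  show ?thesis
  proof (intro bexI[OF _ fX] allI impI)
    fix e :: real assume "e > 0"
    then obtain N where N: "\<forall>m\<ge>N. \<forall>n\<ge>N. lp_dist w p (c m) (c n) < e" using cauchy by blast
    then show "\<exists>N. \<forall>m\<ge>N. lp_dist w p (c m) f \<le> e" using key[OF \<open>e > 0\<close> N] by blast
  qed
qed


lemma powr_le_self: "0 \<le> (x::real) \<Longrightarrow> x \<le> 1 \<Longrightarrow> x powr p \<le> x"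
proof (cases "x = 0")
  case False
  assume "0 \<le> x" "x \<le> 1"
  then have "x powr p \<le> x powr 1" using False p1 by (intro powr_mono') auto
  then show ?thesis using \<open>0 \<le> x\<close> by simp
qed simp

definition sg :: "complex \<Rightarrow> complex" where
  "sg z = (if z = 0 then 1 else z / of_real (norm z))"

lemma sg_norm: "norm (sg z) = 1"
  by (simp add: sg_def norm_divide)

lemma sg_decomp: "z = of_real (norm z) * sg z"
  by (simp add: sg_def)

lemma norm_ofreal_sg: "0 \<le> t \<Longrightarrow> norm (of_real t * sg z) = t"
  by (simp add: norm_mult sg_norm)

lemma step:
  fixes A :: "('a \<Rightarrow> complex) set" and lam r :: real and h :: "'a \<Rightarrow> real" and c :: "'a \<Rightarrow> complex"
  assumes lam: "0 < lam" "lam < 1"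
    and por: "lambda_porous (lp_dist w p) (lp_space w p) lam A"
    and cX: "c \<in> lp_space w p" and h0: "\<And>n. 0 \<le> h n" and hc: "\<And>n. h n \<le> norm (c n)" and r: "r > 0"
  shows "\<exists>h' c' r'. c' \<in> lp_space w p \<and> (\<forall>n. h n \<le> h' n) \<and> (\<forall>n. h' n \<le> norm (c' n)) \<and> r' > 0 \<and> r' \<le> r / 2 \<and>
     (\<forall>u\<in>lp_space w p. lp_dist w p c' u \<le> r' \<longrightarrow> lp_dist w p c u \<le> r) \<and>
     (\<forall>u\<in>lp_space w p. lp_dist w p c' u \<le> r' \<longrightarrow> (\<forall>n. h' n \<le> norm (u n)) \<longrightarrow> u \<notin> A)"
proof -
  define d where "d = lp_dist w p"
  define X where "X = lp_space w p"
  have tri: "d f k \<le> d f g + d g k" if "f \<in> X" "g \<in> X" "k \<in> X" for f g k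
    using d_triangle that unfolding d_def X_def by blast
  define M where "M = 2 + 1 / lam"
  have M1: "M - 1 \<ge> 1" using lam by (simp add: M_def)
  define K where "K = 1 / (M - 1)"
  have K0: "K \<ge> 0" "K \<le> 1" using M1 by (auto simp: K_def)
  have Klam: "K < lam"
  proof -
    have "1 / lam < M - 1" by (simp add: M_def)
    then have "1 < lam * (M - 1)" using lam by (simp add: field_simps)
    then show ?thesis using M1 by (simp add: K_def field_simps)
  qed
  define H where "H = (\<lambda>x. h x powr p * w x)"
  have H0: "H x \<ge> 0" for x by (simp add: H_def less_imp_le wpos)
  have sH: "H summable_on UNIV"
  proof (rule summable_on_comparison_test)
    show "(\<lambda>x. norm (c x) powr p * w x) summable_on UNIV" using cX by (simp add: memX)
    show "H x \<le> norm (c x) powr p * w x" for x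
      unfolding H_def using hc[of x] h0[of x] wpos[of x] p1 by (intro mult_right_mono powr_mono2) auto
  qed (rule H0)
  define e0 where "e0 = (r/4) powr p / (2 * (M - 1) powr p)"
  have e0: "e0 > 0" using r M1 by (simp add: e0_def)
  obtain S where S: "finite S" and Sp: "\<And>F. finite F \<Longrightarrow> S \<subseteq> F \<Longrightarrow> \<bar>sum H F - infsum H UNIV\<bar> < e0 / 2"
  proof -
    have "\<forall>\<^sub>F F in finite_subsets_at_top UNIV. dist (sum H F) (infsum H UNIV) < e0 / 2"
      using infsum_tendsto[OF sH] e0 unfolding tendsto_iff by (meson half_gt_zero)
    then show ?thesis using that unfolding eventually_finite_subsets_at_top by (auto simp: dist_real_def)
  qed
  have tail: "sum H (F - S) \<le> e0" if "finite F" for F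
  proof -
    have "sum H (F \<union> S) = sum H (F - S) + sum H S"
    proof -
      have "F \<union> S = (F - S) \<union> S" by blast
      moreover have "sum H ((F - S) \<union> S) = sum H (F - S) + sum H S"
        using that S by (intro sum.union_disjoint) auto
      ultimately show ?thesis by simp
    qed
    moreover have "\<bar>sum H (F \<union> S) - infsum H UNIV\<bar> < e0 / 2" using Sp[of "F \<union> S"] that S by auto
    moreover have "\<bar>sum H S - infsum H UNIV\<bar> < e0 / 2" using Sp[of S] S by auto
    ultimately show ?thesis by linarith
  qed
  define e1 where "e1 = min 1 (((r/4) powr p / 2) / (sum w S + 1))"
  have sw0: "sum w S \<ge> 0" by (intro sum_nonneg) (simp add: less_imp_le wpos)
  have e1: "e1 > 0" "e1 \<le> 1" using r sw0 by (auto simp: e1_def)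
  have e1p: "e1 powr p * sum w S \<le> (r/4) powr p / 2"
  proof -
    have "e1 powr p * sum w S \<le> e1 * sum w S" using powr_le_self[of e1] e1 sw0 by (intro mult_right_mono) auto
    also have "\<dots> \<le> ((r/4) powr p / 2) / (sum w S + 1) * (sum w S + 1)"
      using sw0 e1 by (intro mult_mono) (auto simp: e1_def)
    also have "\<dots> = (r/4) powr p / 2" using sw0 by (simp add: field_simps)
    finally show ?thesis .
  qed
  define phi where "phi = (\<lambda>x. if x \<in> S then e1 else (M - 1) * h x)"
  have phi0: "phi x \<ge> 0" for x using e1 M1 h0[of x] by (simp add: phi_def)
  define b where "b = (\<lambda>x. c x + of_real (phi x) * sg (c x))"
  have bdec: "b x = of_real (norm (c x) + phi x) * sg (c x)" for x
    unfolding b_def by (subst (1) sg_decomp[of "c x"]) (simp add: algebra_simps)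
  have normb: "norm (b x) = norm (c x) + phi x" for x
    unfolding bdec using phi0[of x] by (intro norm_ofreal_sg) simp
  define h' where "h' = (\<lambda>x. h x + phi x)"
  have hh': "h x \<le> h' x" for x using phi0[of x] by (simp add: h'_def)
  have h'b: "h' x \<le> norm (b x)" for x using hc[of x] by (simp add: h'_def normb)
  define Phi where "Phi = (\<lambda>x. norm (c x - b x) powr p * w x)"
  have Phi_eq: "Phi x = phi x powr p * w x" for x
    using phi0[of x] by (simp add: Phi_def b_def norm_mult sg_norm)
  have finPhi: "sum Phi F \<le> (r/4) powr p" if "finite F" for F
  proof -
    have "sum Phi F = sum Phi (F \<inter> S) + sum Phi (F - S)"
      using that by (simp add: sum.Int_Diff)
    moreover have "sum Phi (F \<inter> S) \<le> e1 powr p * sum w S"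
    proof -
      have "sum Phi (F \<inter> S) = sum (\<lambda>x. e1 powr p * w x) (F \<inter> S)"
        by (intro sum.cong) (auto simp: Phi_eq phi_def)
      also have "\<dots> \<le> sum (\<lambda>x. e1 powr p * w x) S"
        using S by (intro sum_mono2) (auto simp: less_imp_le wpos)
      finally show ?thesis by (simp add: sum_distrib_left)
    qed
    moreover have "sum Phi (F - S) \<le> (M - 1) powr p * e0"
    proof -
      have "sum Phi (F - S) = sum (\<lambda>x. (M - 1) powr p * H x) (F - S)"
        using M1 h0 by (intro sum.cong) (auto simp: Phi_eq phi_def H_def powr_mult)
      also have "\<dots> = (M - 1) powr p * sum H (F - S)" by (simp add: sum_distrib_left)
      also have "\<dots> \<le> (M - 1) powr p * e0" using tail[OF that] by (intro mult_left_mono) auto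
      finally show ?thesis .
    qed
    moreover have "(M - 1) powr p * e0 = (r/4) powr p / 2" using M1 by (simp add: e0_def)
    ultimately show ?thesis using e1p by linarith
  qed
  have Phi0: "Phi x \<ge> 0" for x unfolding Phi_def by (rule mult_nonneg_nonneg[OF powr_ge_zero less_imp_le[OF wpos]])
  have sPhi: "Phi summable_on UNIV"
  proof (rule nonneg_bdd_above_summable_on)
    show "bdd_above (sum Phi ` {F. F \<subseteq> UNIV \<and> finite F})"
      by (rule bdd_aboveI2[where M="(r/4) powr p"]) (erule CollectE, rule finPhi, blast)
  qed (rule Phi0)
  have "(\<lambda>x. c x - b x) \<in> X" using sPhi by (simp add: X_def memX Phi_def)
  from X_diff[OF cX this[unfolded X_def]] have bX: "b \<in> X" by (simp add: X_def)
  have dcb: "d c b \<le> r / 4"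
  proof -
    have "infsum Phi UNIV \<le> (r/4) powr p" by (rule infsum_le_finite_sums[OF sPhi finPhi])
    then have "d c b powr p \<le> (r/4) powr p" by (simp add: Phi_def D_eq d_def)
    note pp = this[unfolded d_def]
    show ?thesis unfolding d_def by (rule powr_le_cancel[OF d_nonneg _ pp]) (use r in simp)
  qed
  have cX': "c \<in> X" using cX by (simp add: X_def)
  show ?thesis
  proof (cases "\<exists>a\<in>A. a \<in> X \<and> d b a \<le> r / 4 \<and> (\<forall>n. h' n \<le> norm (a n))")
    case False
    show ?thesis
    proof (intro exI conjI ballI impI)
      show "b \<in> lp_space w p" using bX by (simp add: X_def)
      show "\<forall>n. h n \<le> h' n" using hh' by blast
      show "\<forall>n. h' n \<le> norm (b n)" using h'b by blast
      show "r / 4 > 0" "r / 4 \<le> r / 2" using r by auto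
    next
      fix u assume u: "u \<in> lp_space w p" "lp_dist w p b u \<le> r / 4"
      have "d c u \<le> d c b + d b u" using tri[OF cX' bX, of u] u by (simp add: X_def)
      then show "lp_dist w p c u \<le> r" using dcb u r by (simp add: d_def)
    next
      fix u assume u: "u \<in> lp_space w p" "lp_dist w p b u \<le> r / 4" "\<forall>n. h' n \<le> norm (u n)"
      then show "u \<notin> A" using False by (auto simp: X_def d_def)
    qed
  next
    case True
    then obtain a where aA: "a \<in> A" and aX: "a \<in> X" and dba: "d b a \<le> r / 4" and h'a: "\<And>n. h' n \<le> norm (a n)"
      by blast
    define del where "del = Min (insert (r/8) ((\<lambda>x. e1 * w x powr (1/p)) ` S))"
    have del0: "del > 0" unfolding del_def using S r e1 wpos by (auto simp: Min_gr_iff intro!: mult_pos_pos) (metis less_irrefl wpos)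
    have del1: "del \<le> r/8" unfolding del_def by (rule Min_le) (use S in auto)
    have del2: "del \<le> e1 * w x powr (1/p)" if "x \<in> S" for x unfolding del_def by (rule Min_le) (use S that in auto)
    have "lambda_porous_at (lp_dist w p) (lp_space w p) lam A a" using por aA by (simp add: lambda_porous_def)
    then obtain y where yX: "y \<in> X" and day: "d a y < del" and ya: "y \<noteq> a"
      and hole: "{z \<in> X. d y z < lam * d a y} \<inter> A = {}"
      using del0 unfolding lambda_porous_at_def X_def d_def by blast
    define t where "t = d a y"
    have t0: "t > 0"
    proof -
      have "t \<ge> 0" by (simp add: t_def d_def d_nonneg)
      moreover have "t \<noteq> 0" using d_zero[of a y] aX yX ya by (auto simp: t_def d_def X_def)
      ultimately show ?thesis by simp
    qed
    define z where "z = (\<lambda>x. if h x \<le> norm (y x) then y x else of_real (h x) * sg (y x))"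
    have hz: "h x \<le> norm (z x)" for x
      using h0[of x] by (auto simp: z_def norm_ofreal_sg)
    have zpt: "norm (z x - y x) \<le> K * norm (a x - y x)" for x
    proof (cases "h x \<le> norm (y x)")
      case True
      then show ?thesis using K0 by (simp add: z_def)
    next
      case False
      have zyeq: "z x - y x = of_real (h x - norm (y x)) * sg (y x)"
        using False by (simp add: z_def algebra_simps) (subst (2) sg_decomp[of "y x"], simp)
      have nzy: "norm (z x - y x) = h x - norm (y x)"
        unfolding zyeq by (rule norm_ofreal_sg) (use False in simp)
      show ?thesis
      proof (cases "x \<in> S")
        case True
        have "norm (a x - y x) * w x powr (1/p) \<le> d a y"
          using pt_bound[of a y x] aX yX by (simp add: X_def d_def)
        also have "\<dots> < e1 * w x powr (1/p)" using day del2[OF True] by simp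
        finally have "norm (a x - y x) < e1" using wpos[of x] by simp
        moreover have "h x + e1 \<le> norm (a x)" using h'a[of x] True by (simp add: h'_def phi_def)
        moreover have "norm (a x) \<le> norm (a x - y x) + norm (y x)" using norm_triangle_ineq[of "a x - y x" "y x"] by simp
        ultimately have False using False by linarith
        then show ?thesis ..
      next
        case notS: False
        have "M * h x \<le> norm (a x)" using h'a[of x] notS by (simp add: h'_def phi_def algebra_simps)
        moreover have "norm (a x) \<le> norm (a x - y x) + norm (y x)" using norm_triangle_ineq[of "a x - y x" "y x"] by simp
        ultimately have "(M - 1) * (h x - norm (y x)) \<le> norm (a x - y x)"
          using M1 h0[of x] False mult_right_mono[of 2 M "norm (y x)"] by (simp add: algebra_simps)
        then have "h x - norm (y x) \<le> K * norm (a x - y x)"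
          using M1 by (simp add: K_def field_simps)
        then show ?thesis using nzy by simp
      qed
    qed
    have zX: "z \<in> X" and dyz: "d y z \<le> K * t"
      using d_compare[of a y K z] aX yX K0 zpt by (auto simp: X_def d_def t_def)
    have dyz2: "d y z < lam * t" using dyz Klam t0 by (smt (verit) mult_strict_right_mono)
    have dyz3: "d y z \<le> t" using dyz K0 t0 by (smt (verit) mult_left_le_one_le)
    define r' where "r' = min (r/4) ((lam * t - d y z) / 2)"
    have r'0: "r' > 0" using dyz2 r by (simp add: r'_def)
    show ?thesis
    proof (intro exI conjI ballI impI)
      show "z \<in> lp_space w p" using zX by (simp add: X_def)
      show "\<forall>n. h n \<le> h n" by simp
      show "\<forall>n. h n \<le> norm (z n)" using hz by blast
      show "r' > 0" by (rule r'0)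
      show "r' \<le> r / 2" using r by (simp add: r'_def)
    next
      fix u assume u: "u \<in> lp_space w p" "lp_dist w p z u \<le> r'"
      then have uX: "u \<in> X" and dzu: "d z u \<le> r/4" by (auto simp: X_def d_def r'_def)
      have "d c u \<le> d c b + d b u" by (rule tri[OF cX' bX uX])
      moreover have "d b u \<le> d b a + d a u" by (rule tri[OF bX aX uX])
      moreover have "d a u \<le> d a y + d y u" by (rule tri[OF aX yX uX])
      moreover have "d y u \<le> d y z + d z u" by (rule tri[OF yX zX uX])
      moreover have "t < r/8" using day del1 by (simp add: t_def)
      ultimately show "lp_dist w p c u \<le> r" using dcb dba dyz3 dzu by (simp add: d_def t_def)
    next
      fix u assume u: "u \<in> lp_space w p" "lp_dist w p z u \<le> r'" "\<forall>n. h n \<le> norm (u n)"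
      then have uX: "u \<in> X" and dzu: "d z u \<le> (lam * t - d y z) / 2" by (auto simp: X_def d_def r'_def)
      have "d y u \<le> d y z + d z u" by (rule tri[OF yX zX uX])
      then have "d y u < lam * d a y" using dzu dyz2 by (simp add: t_def)
      then show "u \<notin> A" using hole uX by blast
    qed
  qed
qed

end


lemma haar_pos:
  assumes "discrete_hypergroup c iv e"
  shows "haar_weight c iv e x > 0"
proof -
  have "c x (iv x) e \<noteq> 0" "c x (iv x) e \<ge> 0"
    using assms unfolding discrete_hypergroup_def by metis+
  then show ?thesis by (simp add: haar_weight_def)
qed

theorem proposition3p10:
  fixes c :: "'a \<Rightarrow> 'a \<Rightarrow> 'a \<Rightarrow> real" and iv :: "'a \<Rightarrow> 'a" and e :: 'a
    and p :: real and g :: "'a \<Rightarrow> complex"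
  assumes "discrete_hypergroup c iv e"
    and "1 \<le> p"
    and "g \<in> lp_space (haar_weight c iv e) p"
  shows "\<not> sigma_porous (lp_dist (haar_weight c iv e) p) (lp_space (haar_weight c iv e) p)
           {f \<in> lp_space (haar_weight c iv e) p. \<forall>x. norm (g x) \<le> norm (f x)}"
proof
  define w where "w = haar_weight c iv e"
  have wpos: "\<And>x. w x > 0" unfolding w_def using haar_pos[OF assms(1)] by blast
  have p1: "1 \<le> p" by (rule assms(2))
  define X where "X = lp_space w p"
  define d where "d = lp_dist w p"
  have gX: "g \<in> X" using assms(3) by (simp add: X_def w_def)
  assume "sigma_porous (lp_dist (haar_weight c iv e) p) (lp_space (haar_weight c iv e) p)
           {f \<in> lp_space (haar_weight c iv e) p. \<forall>x. norm (g x) \<le> norm (f x)}"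
  then obtain lam and A :: "nat \<Rightarrow> ('a \<Rightarrow> complex) set" where lam: "0 < lam" "lam < 1"
    and AX: "\<And>n. A n \<subseteq> X" and Apor: "\<And>n. lambda_porous d X lam (A n)"
    and Eeq: "{f \<in> X. \<forall>x. norm (g x) \<le> norm (f x)} = (\<Union>n. A n)"
    unfolding sigma_porous_def sigma_lambda_porous_def X_def d_def w_def by blast
  have tri: "d f k \<le> d f h + d h k" if "f \<in> X" "h \<in> X" "k \<in> X" for f h k
    using d_triangle[where w=w and p=p, OF wpos p1] that unfolding d_def X_def by blast
  have dsym: "d f h = d h f" for f h unfolding d_def by (rule d_sym[where w=w and p=p, OF wpos p1])
  have dnn: "d f h \<ge> 0" for f h unfolding d_def by (rule d_nonneg[where w=w and p=p, OF wpos p1])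
  define good where "good = (\<lambda>(h :: 'a \<Rightarrow> real, c' :: 'a \<Rightarrow> complex, r :: real).
      c' \<in> X \<and> (\<forall>n. 0 \<le> h n) \<and> (\<forall>n. norm (g n) \<le> h n) \<and> (\<forall>n. h n \<le> norm (c' n)) \<and> r > 0)"
  define Fs where "Fs = (\<lambda>(h :: 'a \<Rightarrow> real, c' :: 'a \<Rightarrow> complex, r :: real).
      {u \<in> X. d c' u \<le> r \<and> (\<forall>n. h n \<le> norm (u n))})"
  have ex: "\<exists>s'. good s \<longrightarrow> good s' \<and> snd (snd s') \<le> snd (snd s) / 2 \<and> Fs s' \<subseteq> Fs s \<and> Fs s' \<inter> A k = {}"
    for k s
  proof (cases "good s")
    case True
    obtain h c' r where s: "s = (h, c', r)" by (cases s) auto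
    have gs: "c' \<in> X" "\<And>n. 0 \<le> h n" "\<And>n. norm (g n) \<le> h n" "\<And>n. h n \<le> norm (c' n)" "r > 0"
      using True by (auto simp: s good_def)
    have por: "lambda_porous (lp_dist w p) (lp_space w p) lam (A k)"
      using Apor by (simp add: d_def X_def)
    obtain h' c'' r' where st: "c'' \<in> lp_space w p" "\<forall>n. h n \<le> h' n" "\<forall>n. h' n \<le> norm (c'' n)" "r' > 0" "r' \<le> r / 2"
      "\<forall>u\<in>lp_space w p. lp_dist w p c'' u \<le> r' \<longrightarrow> lp_dist w p c' u \<le> r"
      "\<forall>u\<in>lp_space w p. lp_dist w p c'' u \<le> r' \<longrightarrow> (\<forall>n. h' n \<le> norm (u n)) \<longrightarrow> u \<notin> A k"
      using step[where w=w and p=p and h=h and c=c' and r=r and A="A k" and lam=lam,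
          OF wpos p1 lam por gs(1)[unfolded X_def] gs(2) gs(4) gs(5)] by blast
    show ?thesis
    proof (intro exI impI conjI)
      show "good (h', c'', r')" unfolding good_def using st gs
        by (auto simp: X_def) (metis order_trans)+
      show "snd (snd (h', c'', r')) \<le> snd (snd s) / 2" using st by (simp add: s)
      show "Fs (h', c'', r') \<subseteq> Fs s" unfolding s Fs_def using st
        by (auto simp: X_def d_def intro: order_trans)
      show "Fs (h', c'', r') \<inter> A k = {}" unfolding Fs_def using st by (auto simp: X_def d_def)
    qed
  qed auto
  define nxt where "nxt k s = (SOME s'. good s \<longrightarrow> good s' \<and> snd (snd s') \<le> snd (snd s) / 2 \<and> Fs s' \<subseteq> Fs s \<and> Fs s' \<inter> A k = {})" for k s
  have nxt: "good (nxt k s) \<and> snd (snd (nxt k s)) \<le> snd (snd s) / 2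
      \<and> Fs (nxt k s) \<subseteq> Fs s \<and> Fs (nxt k s) \<inter> A k = {}" if "good s" for k s
  proof -
    have "good s \<longrightarrow> good (nxt k s) \<and> snd (snd (nxt k s)) \<le> snd (snd s) / 2
      \<and> Fs (nxt k s) \<subseteq> Fs s \<and> Fs (nxt k s) \<inter> A k = {}"
      unfolding nxt_def by (rule someI_ex[OF ex])
    then show ?thesis using that by blast
  qed
  define s0 where "s0 = ((\<lambda>n. norm (g n)), g, 1::real)"
  define st where "st = rec_nat s0 nxt"
  have st0: "st 0 = s0" and stS: "st (Suc k) = nxt k (st k)" for k by (simp_all add: st_def)
  have good0: "good s0" unfolding good_def s0_def using gX by auto
  have gst: "good (st k)" for k by (induction k) (use good0 nxt in \<open>auto simp: st0 stS\<close>)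
  define ctr where "ctr k = fst (snd (st k))" for k
  define hh where "hh k = fst (st k)" for k
  define rr where "rr k = snd (snd (st k))" for k
  have st_eq: "st k = (hh k, ctr k, rr k)" for k by (simp add: ctr_def hh_def rr_def)
  have Fs_eq: "Fs (st k) = {u \<in> X. d (ctr k) u \<le> rr k \<and> (\<forall>n. hh k n \<le> norm (u n))}" for k
    by (simp add: st_eq Fs_def)
  have good_k: "ctr k \<in> X" "\<And>n. norm (g n) \<le> hh k n" "\<And>n. hh k n \<le> norm (ctr k n)" "rr k > 0" for k
    using gst[of k] by (auto simp: st_eq good_def)
  have rr_le: "rr k \<le> (1/2) ^ k" for k
  proof (induction k)
    case 0 then show ?case by (simp add: rr_def st0 s0_def)
  next
    case (Suc k)
    have "rr (Suc k) \<le> rr k / 2" using nxt[OF gst[of k]] by (simp add: rr_def stS)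
    then show ?case using Suc by simp
  qed
  have nest1: "Fs (st (Suc k)) \<subseteq> Fs (st k)" for k using nxt[OF gst[of k]] by (simp add: stS)
  have nest: "Fs (st m) \<subseteq> Fs (st k)" if "k \<le> m" for k m
    using lift_Suc_antimono_le[of "\<lambda>k. Fs (st k)", OF nest1 that] .
  have avoid: "Fs (st (Suc k)) \<inter> A k = {}" for k using nxt[OF gst[of k]] by (simp add: stS)
  have ctr_in: "ctr k \<in> Fs (st k)" for k
    using good_k(1)[of k] good_k(3)[of k] good_k(4)[of k] by (simp add: Fs_eq d_def d_self[where w=w and p=p, OF wpos p1])
  have dcm: "d (ctr k) (ctr m) \<le> (1/2) ^ k" if "k \<le> m" for k m
    using nest[OF that] ctr_in[of m] rr_le[of k] by (auto simp: Fs_eq)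
  have cau: "\<exists>N. \<forall>m\<ge>N. \<forall>n\<ge>N. lp_dist w p (ctr m) (ctr n) < e'" if ep: "e' > 0" for e'
  proof -
    obtain N where N: "(1/2::real) ^ N < e' / 2"
      using real_arch_pow_inv[of "e' / 2" "1/2"] ep by auto
    show ?thesis
    proof (intro exI allI impI)
      fix m n assume "N \<le> m" "N \<le> n"
      have "d (ctr m) (ctr n) \<le> d (ctr m) (ctr N) + d (ctr N) (ctr n)"
        using tri good_k by blast
      also have "\<dots> \<le> (1/2)^N + (1/2)^N"
        using dcm[OF \<open>N \<le> m\<close>] dcm[OF \<open>N \<le> n\<close>] dsym by (intro add_mono) auto
      finally show "lp_dist w p (ctr m) (ctr n) < e'" using N by (simp add: d_def)
    qed
  qed
  obtain f where fX: "f \<in> lp_space w p" and fconv: "\<And>e'. e' > 0 \<Longrightarrow> \<exists>N. \<forall>m\<ge>N. lp_dist w p (ctr m) f \<le> e'"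
    using complete[where w=w and p=p, OF wpos p1, of ctr] good_k cau by (auto simp: X_def)
  have fX': "f \<in> X" using fX by (simp add: X_def)
  have f_in: "f \<in> Fs (st k)" for k
  proof -
    have "d (ctr k) f \<le> rr k"
    proof (rule field_le_epsilon)
      fix e' :: real assume "e' > 0"
      then obtain N where N: "\<forall>m\<ge>N. d (ctr m) f \<le> e'" using fconv by (auto simp: d_def)
      define m where "m = max N k"
      have "d (ctr k) f \<le> d (ctr k) (ctr m) + d (ctr m) f" using tri good_k fX' by blast
      moreover have "d (ctr k) (ctr m) \<le> rr k"
        using nest[of k m] ctr_in[of m] by (auto simp: Fs_eq m_def)
      moreover have "d (ctr m) f \<le> e'" using N by (simp add: m_def)
      ultimately show "d (ctr k) f \<le> rr k + e'" by simp
    qed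
    moreover have "hh k n \<le> norm (f n)" for n
    proof (rule field_le_epsilon)
      fix e' :: real assume "e' > 0"
      have wn: "w n powr (1/p) > 0" using wpos[of n] by simp
      obtain N where N: "\<forall>m\<ge>N. d (ctr m) f \<le> e' * w n powr (1/p)"
        using fconv[of "e' * w n powr (1/p)"] \<open>e' > 0\<close> wn by (auto simp: d_def)
      define m where "m = max N k"
      have "norm (ctr m n - f n) * w n powr (1/p) \<le> d (ctr m) f"
        using pt_bound[where w=w and p=p, OF wpos p1] good_k fX' by (simp add: d_def X_def)
      also have "\<dots> \<le> e' * w n powr (1/p)" using N by (simp add: m_def)
      finally have "norm (ctr m n - f n) \<le> e'" using wn by simp
      moreover have "hh k n \<le> norm (ctr m n)"
        using nest[of k m] ctr_in[of m] by (auto simp: Fs_eq m_def)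
      moreover have "norm (ctr m n) \<le> norm (ctr m n - f n) + norm (f n)"
        using norm_triangle_ineq[of "ctr m n - f n" "f n"] by simp
      ultimately show "hh k n \<le> norm (f n) + e'" by simp
    qed
    ultimately show ?thesis using fX' by (simp add: Fs_eq)
  qed
  have "f \<in> {f \<in> X. \<forall>x. norm (g x) \<le> norm (f x)}"
    using f_in[of 0] good_k(2)[of _ 0] fX' by (auto simp: Fs_eq) (meson order_trans)
  then obtain k where "f \<in> A k" using Eeq by auto
  with f_in[of "Suc k"] avoid[of k] show False by blast
qed

end
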